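(* Let $p$ be a prime, $m\geq 1$, and $1\leq r_1<r_2<\dots<r_m$ integers. Let $F(x)=(x-1)\Phi_{p^{r_1}}(x)\Phi_{p^{r_2}}(x)\cdots\Phi_{p^{r_m}}(x)$. If $E$ is a set of roots of $F$ such that $F(\epsilon/\epsilon')=0$ for all $\epsilon,\epsilon'\in E$, then $\#E\leq p^m$.
   Context: $\Phi_s(x)$ denotes the $s$-th cyclotomic polynomial. *)

theory Defs
  imports "HOL-Complex_Analysis.Complex_Analysis" "HOL-Computational_Algebra.Polynomial"
begin

definition cyclotomic :: "nat \<Rightarrow> complex poly" where
  "cyclotomic n = (\<Prod>k\<in>{k. k < n \<and> coprime k n}. [:- cis (2 * pi * real k / real n), 1:])"

end

theory Submission
  imports Defs
begin

lemma cis_2pi_eq_1_iff: "cis (2*pi*x) = 1 \<longleftrightarrow> x \<in> \<int>"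
proof
  assume "cis (2*pi*x) = 1"
  then have "exp (\<i> * complex_of_real (2*pi*x)) = 1" by (simp add: cis_conv_exp)
  then obtain n where "2*pi*x = real_of_int (2*n) * pi" by (auto simp: exp_eq_1)
  then have "x = of_int n" by simp
  then show "x \<in> \<int>" by simp
next
  assume "x \<in> \<int>" then show "cis (2*pi*x) = 1" by (rule cis_multiple_2pi)
qed

lemma cis_int_eq_1_iff:
  assumes "N \<noteq> 0"
  shows "cis (2*pi*(of_int d / of_int N)) = 1 \<longleftrightarrow> N dvd d"
proof -
  have "(of_int d / of_int N :: real) \<in> \<int> \<longleftrightarrow> N dvd d"
  proof
    assume "(of_int d / of_int N :: real) \<in> \<int>"
    then obtain k where "(of_int d / of_int N :: real) = of_int k" by (elim Ints_cases)
    then have "(of_int d :: real) = of_int (N * k)" using assms by (simp add: field_simps)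
    then have "d = N * k" by linarith
    then show "N dvd d" by simp
  next
    assume "N dvd d" then obtain k where "d = N * k" by blast
    then show "(of_int d / of_int N :: real) \<in> \<int>" using assms by simp
  qed
  then show ?thesis by (subst cis_2pi_eq_1_iff) simp
qed

lemma comb:
  fixes p :: nat and S :: "nat set"
  assumes "p \<ge> 1"
  shows "finite S \<Longrightarrow> (\<And>a b. a\<in>A \<Longrightarrow> b\<in>A \<Longrightarrow> a\<noteq>b \<Longrightarrow>
     \<exists>s\<in>S. int p^s dvd (a-b) \<and> \<not> int p^(Suc s) dvd (a-b)) \<Longrightarrow> card (A::int set) \<le> p^card S"
proof (induction "card S" arbitrary: S A)
  case 0
  then have "S = {}" by simp
  with 0 have "\<forall>a\<in>A. \<forall>b\<in>A. a = b" by auto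
  then have "card A \<le> Suc 0"
    by (cases "finite A") (auto simp: card_le_Suc0_iff_eq)
  then show ?case using 0 by simp
next
  case (Suc n)
  show ?case
  proof (cases "A = {}")
    case True then show ?thesis by simp
  next
    case False
    then obtain a0 where a0: "a0 \<in> A" by blast
    have Sne: "S \<noteq> {}" using Suc by auto
    define t where "t = Min S"
    have tS: "t \<in> S" using Sne Suc.prems(1) by (simp add: t_def)
    have tmin: "\<And>s. s \<in> S \<Longrightarrow> t \<le> s" using Suc.prems(1) by (simp add: t_def)
    have dvdt: "int p ^ t dvd (a - a0)" if aA: "a \<in> A" for a
    proof (cases "a = a0")
      case True then show ?thesis by simp
    next
      case False
      then obtain s where "s \<in> S" "int p^s dvd (a-a0)" using Suc.prems(2) aA a0 by blast
      moreover have "int p ^ t dvd int p ^ s" using tmin[OF \<open>s \<in> S\<close>] by (simp add: le_imp_power_dvd)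
      ultimately show ?thesis using dvd_trans by blast
    qed
    define f where "f a = ((a - a0) div int p ^ t) mod int p" for a
    define B where "B k = {a\<in>A. f a = k}" for k
    have AU: "A = (\<Union>k\<in>{0..<int p}. B k)"
    proof -
      have "f a \<in> {0..<int p}" for a using assms by (simp add: f_def)
      then show ?thesis by (auto simp: B_def)
    qed
    have cardS: "card (S - {t}) = n" using Suc.hyps(2) tS Suc.prems(1) by simp
    have Bk: "card (B k) \<le> p ^ n" for k
    proof -
      have "card (B k) \<le> p ^ card (S - {t})"
      proof (rule Suc.hyps(1))
        show "n = card (S - {t})" using cardS by simp
        show "finite (S - {t})" using Suc.prems(1) by simp
        fix a b assume a: "a \<in> B k" and b: "b \<in> B k" and ab: "a \<noteq> b"
        obtain s where s: "s \<in> S" "int p^s dvd (a-b)" "\<not> int p^(Suc s) dvd (a-b)"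
          using Suc.prems(2) a b ab by (auto simp: B_def)
        obtain qa where qa: "a - a0 = int p ^ t * qa" using dvdt a by (auto simp: B_def elim!: dvdE)
        obtain qb where qb: "b - a0 = int p ^ t * qb" using dvdt b by (auto simp: B_def elim!: dvdE)
        have "f a = f b" using a b by (simp add: B_def)
        then have "qa mod int p = qb mod int p" using qa qb assms by (simp add: f_def)
        then have "int p dvd (qa - qb)" by (simp add: mod_eq_dvd_iff)
        then have "int p ^ Suc t dvd int p ^ t * (qa - qb)" by simp
        moreover have "a - b = int p ^ t * (qa - qb)" using qa qb by (simp add: algebra_simps)
        ultimately have "int p ^ Suc t dvd (a - b)" by simp
        then have "s \<noteq> t" using s by auto
        then show "\<exists>s\<in>S - {t}. int p^s dvd (a-b) \<and> \<not> int p^(Suc s) dvd (a-b)" using s by auto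
      qed
      then show ?thesis using cardS by simp
    qed
    have "card A \<le> (\<Sum>k\<in>{0..<int p}. card (B k))"
      unfolding AU by (rule card_UN_le) simp
    also have "\<dots> \<le> (\<Sum>k\<in>{0..<int p}. p ^ n)" by (rule sum_mono) (rule Bk)
    also have "\<dots> = p ^ Suc n" by simp
    finally show ?thesis using Suc.hyps(2) by simp
  qed
qed


lemma roots_F:
  fixes p m :: nat and r :: "nat \<Rightarrow> nat" and z :: complex
  assumes "poly ([:-1, 1:] * (\<Prod>i\<in>{1..m}. cyclotomic (p ^ r i))) z = 0"
  shows "z = 1 \<or> (\<exists>i\<in>{1..m}. \<exists>k. k < p ^ r i \<and> coprime k (p ^ r i) \<and>
            z = cis (2 * pi * real k / real (p ^ r i)))"
proof -
  have "z = 1 \<or> (\<exists>i\<in>{1..m}. poly (cyclotomic (p ^ r i)) z = 0)"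
  proof -
    have h: "(z - 1) * (\<Prod>i\<in>{1..m}. poly (cyclotomic (p ^ r i)) z) = 0"
      using assms by (simp add: poly_prod, blast)
    then have "z = 1 \<or> (\<Prod>i\<in>{1..m}. poly (cyclotomic (p ^ r i)) z) = 0" by simp
    then show ?thesis using prod_zero_iff[OF finite_atLeastAtMost, of "\<lambda>i. poly (cyclotomic (p ^ r i)) z" 1 m] by blast
  qed
  then show ?thesis
  proof
    assume "\<exists>i\<in>{1..m}. poly (cyclotomic (p ^ r i)) z = 0"
    then obtain i where i: "i \<in> {1..m}" "poly (cyclotomic (p ^ r i)) z = 0" by blast
    then have "\<exists>k. k < p ^ r i \<and> coprime k (p ^ r i) \<and> z = cis (2 * pi * real k / real (p ^ r i))"
      by (auto simp: cyclotomic_def poly_prod)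
    then show ?thesis using i by blast
  qed simp
qed

lemma monoj:
  assumes "\<And>i. 1 \<le> i \<Longrightarrow> i < m \<Longrightarrow> (r::nat\<Rightarrow>nat) i < r (Suc i)"
  shows "1 \<le> i \<Longrightarrow> i \<le> j \<Longrightarrow> j \<le> m \<Longrightarrow> r i \<le> r j"
proof (induction j)
  case 0 then show ?case by simp
next
  case (Suc j)
  show ?case
  proof (cases "i = Suc j")
    case False
    then have ij: "i \<le> j" using Suc.prems by simp
    then have "r i \<le> r j" using Suc.IH Suc.prems by simp
    moreover have "r j < r (Suc j)" using assms[of j] Suc.prems ij by simp
    ultimately show ?thesis by simp
  qed simp
qed

theorem mainTheorem4:
  fixes p m :: nat and r :: "nat \<Rightarrow> nat" and E :: "complex set"
  assumes "prime p"
    and "m \<ge> 1"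
    and "r 1 \<ge> 1"
    and "\<And>i. 1 \<le> i \<Longrightarrow> i < m \<Longrightarrow> r i < r (Suc i)"
    and "E \<subseteq> {z. poly ([:-1, 1:] * (\<Prod>i\<in>{1..m}. cyclotomic (p ^ r i))) z = 0}"
    and "\<And>e e'. e \<in> E \<Longrightarrow> e' \<in> E \<Longrightarrow>
           poly ([:-1, 1:] * (\<Prod>i\<in>{1..m}. cyclotomic (p ^ r i))) (e / e') = 0"
  shows "card E \<le> p ^ m"
proof -
  have p1: "p > 1" using assms(1) prime_gt_1_nat by blast
  have monoj: "r i \<le> r j" if "1 \<le> i" "i \<le> j" "j \<le> m" for i j
    using monoj[where m=m and r=r and i=i and j=j, OF assms(4) that] .
  define R where "R = r m"
  define N where "N = int p ^ R"
  have Npos: "N > 0" using p1 by (simp add: N_def)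
  have ri: "1 \<le> r i \<and> r i \<le> R" if "i \<in> {1..m}" for i
    using monoj[of 1 i] monoj[of i m] that assms(3) by (auto simp: R_def)
  define g where "g a = cis (2 * pi * (of_int a / of_int N))" for a :: int
  have gdiv: "g a / g b = g (a - b)" for a b
    by (simp add: g_def cis_divide diff_divide_distrib right_diff_distrib)
  have cyc: "cis (2 * pi * real k / real (p ^ r i)) = g (int k * int p ^ (R - r i))"
    if "i \<in> {1..m}" for i k
  proof -
    have "R = (R - r i) + r i" using ri[OF that] by simp
    then have "N = int p ^ (R - r i) * int p ^ r i" unfolding N_def by (metis power_add)
    then have "2 * pi * real k / real (p ^ r i) = 2 * pi * (of_int (int k * int p ^ (R - r i)) / of_int N)"
      using p1 by (simp add: field_simps)
    then show ?thesis by (simp add: g_def)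
  qed
  have rootg: "\<exists>a\<in>{0..<N}. z = g a" if "poly ([:-1, 1:] * (\<Prod>i\<in>{1..m}. cyclotomic (p ^ r i))) z = 0" for z
  proof -
    from roots_F[OF that] show ?thesis
    proof
      assume "z = 1" then show ?thesis using Npos by (intro bexI[of _ 0]) (auto simp: g_def)
    next
      assume "\<exists>i\<in>{1..m}. \<exists>k. k < p ^ r i \<and> coprime k (p ^ r i) \<and> z = cis (2 * pi * real k / real (p ^ r i))"
      then obtain i k where i: "i \<in> {1..m}" "k < p ^ r i" "z = cis (2 * pi * real k / real (p ^ r i))" by blast
      have "R = (R - r i) + r i" using ri[OF i(1)] by simp
      then have NN: "N = int p ^ (R - r i) * int p ^ r i" unfolding N_def by (metis power_add)
      have "int k * int p ^ (R - r i) < int p ^ r i * int p ^ (R - r i)"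
        using i(2) p1 by (intro mult_strict_right_mono) (auto simp flip: of_nat_power)
      then have "int k * int p ^ (R - r i) \<in> {0..<N}" using NN by (simp add: mult.commute)
      then show ?thesis using cyc[OF i(1)] i(3) by blast
    qed
  qed
  define A where "A = {a\<in>{0..<N}. g a \<in> E}"
  have EA: "E \<subseteq> g ` A"
  proof
    fix z assume "z \<in> E"
    then obtain a where "a \<in> {0..<N}" "z = g a" using rootg assms(5) by blast
    then show "z \<in> g ` A" using \<open>z \<in> E\<close> unfolding A_def by blast
  qed
  have finA: "finite A" unfolding A_def by (rule finite_subset[of _ "{0..<N}"]) auto
  have "card E \<le> card (g ` A)" using EA finA by (intro card_mono) auto
  also have "\<dots> \<le> card A" by (rule card_image_le[OF finA])
  also have "\<dots> \<le> p ^ card ((\<lambda>i. R - r i) ` {1..m})"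
  proof (rule comb)
    show "p \<ge> 1" using p1 by simp
    show "finite ((\<lambda>i. R - r i) ` {1..m})" by simp
    fix a b assume a: "a \<in> A" and b: "b \<in> A" and ab: "a \<noteq> b"
    have "poly ([:-1, 1:] * (\<Prod>i\<in>{1..m}. cyclotomic (p ^ r i))) (g (a - b)) = 0"
      using assms(6)[of "g a" "g b"] a b gdiv by (auto simp: A_def)
    from roots_F[OF this] show "\<exists>s\<in>(\<lambda>i. R - r i) ` {1..m}. int p^s dvd (a-b) \<and> \<not> int p^(Suc s) dvd (a-b)"
    proof
      assume "g (a - b) = 1"
      then have "N dvd (a - b)" using cis_int_eq_1_iff[of N "a - b"] Npos unfolding g_def by simp
      moreover have "\<bar>a - b\<bar> < N" using a b by (auto simp: A_def)
      ultimately have False using ab dvd_imp_le_int[of "a - b" N] by simp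
      then show ?thesis ..
    next
      assume "\<exists>i\<in>{1..m}. \<exists>k. k < p ^ r i \<and> coprime k (p ^ r i) \<and> g (a - b) = cis (2 * pi * real k / real (p ^ r i))"
      then obtain i k where i: "i \<in> {1..m}" "coprime k (p ^ r i)" "g (a - b) = cis (2 * pi * real k / real (p ^ r i))" by blast
      define s where "s = R - r i"
      have "R = s + r i" using ri[OF i(1)] by (simp add: s_def)
      then have NN: "N = int p ^ s * int p ^ r i" unfolding N_def by (metis power_add)
      have "g (a - b) = g (int k * int p ^ s)" using i(3) cyc[OF i(1)] by (simp add: s_def)
      then have "g (a - b - int k * int p ^ s) = 1" using gdiv[of "a - b" "int k * int p ^ s"]
        by (simp add: g_def)
      then have Nd: "N dvd (a - b - int k * int p ^ s)"
        using cis_int_eq_1_iff[of N "a - b - int k * int p ^ s"] Npos unfolding g_def by simp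
      have "int p ^ s dvd N" using NN by simp
      then have "int p ^ s dvd (a - b - int k * int p ^ s)" using Nd dvd_trans by blast
      have e1: "a - b = (a - b - int k * int p ^ s) + int k * int p ^ s" by simp
      have d1: "int p ^ s dvd (a - b)"
        by (subst e1, rule dvd_add) (use \<open>int p ^ s dvd (a - b - int k * int p ^ s)\<close> in auto)
      have "\<not> int p ^ Suc s dvd (a - b)"
      proof
        assume h: "int p ^ Suc s dvd (a - b)"
        have "Suc s \<le> R" using \<open>R = s + r i\<close> ri[OF i(1)] by simp
        then have "int p ^ Suc s dvd N" unfolding N_def by (rule le_imp_power_dvd)
        then have h2: "int p ^ Suc s dvd (a - b - int k * int p ^ s)" using Nd dvd_trans by blast
        have e2: "int k * int p ^ s = (a - b) - (a - b - int k * int p ^ s)" by simp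
        have "int p ^ Suc s dvd int k * int p ^ s"
          by (subst e2, rule dvd_diff) (use h h2 in auto)
        then have "int p * int p ^ s dvd int k * int p ^ s" by simp
        then have "int p dvd int k" using p1 by (subst (asm) dvd_mult_cancel_right) simp
        then have "p dvd k" by simp
        moreover have "p dvd p ^ r i" using ri[OF i(1)] by (simp add: dvd_power)
        ultimately have "p dvd 1" using i(2) by (meson coprime_common_divisor)
        then show False using p1 by simp
      qed
      then show ?thesis using d1 i(1) s_def by blast
    qed
  qed
  also have "\<dots> \<le> p ^ m"
    using p1 card_image_le[of "{1..m}" "\<lambda>i. R - r i"] by (intro power_increasing) auto
  finally show ?thesis .
qed

end
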